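(* Let $p$ be a prime and let $P$ be a finite $p$-group which is a Roquette group. Then $P$ has no non-trivial expansive subgroup whose $P$-core is trivial.
   Context: A finite group $G$ is a Roquette group if all its normal abelian subgroups are cyclic. For $g\in G$ and $T\le G$ write ${}^gT=gTg^{-1}$. For a subgroup $X$ of a group $H$, the $H$-core of $X$ is $\bigcap_{h\in H}hXh^{-1}$, the largest normal subgroup of $H$ contained in $X$. A subgroup $T$ of a finite group $G$ is expansive in $G$ if for every $g\in G\setminus N_G(T)$, the $N_G(T)$-core of the subgroup $({}^gT\cap N_G(T))\,T$ contains $T$ properly. "Non-trivial" means $T\neq 1$. *)

theory Defs
  imports "HOL-Algebra.Algebra"
begin

definition conj_set :: "('a, 'b) monoid_scheme \<Rightarrow> 'a \<Rightarrow> 'a set \<Rightarrow> 'a set" where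
  "conj_set M g T = g <#\<^bsub>M\<^esub> T #>\<^bsub>M\<^esub> inv\<^bsub>M\<^esub> g"

definition core_in :: "('a, 'b) monoid_scheme \<Rightarrow> 'a set \<Rightarrow> 'a set \<Rightarrow> 'a set" where
  "core_in M S Y = {z. \<forall>h\<in>S. z \<in> conj_set M h Y}"

definition roquette_group :: "('a, 'b) monoid_scheme \<Rightarrow> bool" where
  "roquette_group M \<longleftrightarrow> group M \<and> finite (carrier M) \<and>
     (\<forall>A. A \<lhd> M \<and> comm_group (M\<lparr>carrier := A\<rparr>) \<longrightarrow> cyclic_group (M\<lparr>carrier := A\<rparr>))"

definition expansive :: "('a, 'b) monoid_scheme \<Rightarrow> 'a set \<Rightarrow> bool" where
  "expansive M T \<longleftrightarrow> subgroup T M \<and>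
     (\<forall>g \<in> carrier M - normalizer M T.
        T \<subset> core_in M (normalizer M T)
               ((conj_set M g T \<inter> normalizer M T) <#>\<^bsub>M\<^esub> T))"

end

theory Submission
  imports Defs
begin

lemma nt_omega:
  fixes p m b z :: nat
  assumes p: "Factorial_Ring.prime p" and h1: "m dvd b * p" and h2: "m dvd z * p" and h3: "\<not> m dvd z"
  shows "\<exists>i. (z * i) mod m = b mod m"
proof -
  have "p dvd m"
  proof (rule ccontr)
    assume "\<not> p dvd m"
    then have "coprime p m" using p by (simp add: prime_imp_coprime)
    then have "coprime m p" by (simp add: coprime_commute)
    then show False using h2 h3 coprime_dvd_mult_left_iff by blast
  qed
  then obtain m' where m: "m = p * m'" by blast
  have pp: "p > 0" using p prime_gt_0_nat by blast
  have "m' dvd z" using h2 m pp by (simp add: mult.commute)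
  then obtain u where u: "z = m' * u" by blast
  have "m' dvd b" using h1 m pp by (simp add: mult.commute)
  then obtain v where v: "b = m' * v" by blast
  have np: "\<not> p dvd u"
  proof
    assume "p dvd u"
    then obtain w where "u = p * w" by blast
    then have "z = m * w" using u m by simp
    then show False using h3 by simp
  qed
  then have u0: "u \<noteq> 0" by (metis dvd_0_right)
  have "coprime p u" using p np by (simp add: prime_imp_coprime)
  then have g: "gcd u p = 1" by (simp add: coprime_commute)
  obtain x y where xy: "u * x = p * y + gcd u p" using bezout_nat[OF u0] by blast
  have e1: "u * x = p * y + 1" using xy g by simp
  have "u * (x * v) = (u * x) * v" by (simp add: mult.assoc)
  also have "\<dots> = v + p * (y * v)" unfolding e1 by (simp add: algebra_simps)
  finally have "u * (x * v) = v + p * (y * v)" .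
  then have "(u * (x * v)) mod p = v mod p" by simp
  then have "(m' * (u * (x * v))) mod (m' * p) = (m' * v) mod (m' * p)"
    by (simp add: mod_mult_mult1)
  then have "(z * (x * v)) mod m = b mod m" using u v m by (simp add: mult.assoc mult.commute)
  then show ?thesis by blast
qed

context group begin

lemma inv_cancel_l [simp]: "x \<in> carrier G \<Longrightarrow> y \<in> carrier G \<Longrightarrow> x \<otimes> (inv x \<otimes> y) = y"
  by (simp add: m_assoc[symmetric])
lemma inv_cancel_l' [simp]: "x \<in> carrier G \<Longrightarrow> y \<in> carrier G \<Longrightarrow> inv x \<otimes> (x \<otimes> y) = y"
  by (simp add: m_assoc[symmetric])

lemma conj_mult:
  assumes "x \<in> carrier G" "a \<in> carrier G" "b \<in> carrier G"
  shows "x \<otimes> (a \<otimes> b) \<otimes> inv x = (x \<otimes> a \<otimes> inv x) \<otimes> (x \<otimes> b \<otimes> inv x)"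
  using assms by (simp add: m_assoc)

lemma conj_pow:
  assumes "x \<in> carrier G" "a \<in> carrier G"
  shows "x \<otimes> a [^] (n::nat) \<otimes> inv x = (x \<otimes> a \<otimes> inv x) [^] n"
proof (induction n)
  case 0 then show ?case using assms by simp
next
  case (Suc n)
  have "x \<otimes> a [^] Suc n \<otimes> inv x = (x \<otimes> a [^] n \<otimes> inv x) \<otimes> (x \<otimes> a \<otimes> inv x)"
    using assms by (simp add: m_assoc)
  then show ?case using Suc by simp
qed

lemma pow_mod_ord: "a \<in> carrier G \<Longrightarrow> a [^] (k::nat) = a [^] (k mod ord a)"
proof -
  assume a: "a \<in> carrier G"
  have "a [^] k = a [^] (k mod ord a + ord a * (k div ord a))" by simp
  also have "\<dots> = a [^] (k mod ord a) \<otimes> (a [^] ord a) [^] (k div ord a)"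
    using a by (simp only: nat_pow_pow nat_pow_mult)
  also have "\<dots> = a [^] (k mod ord a)" using a by simp
  finally show ?thesis .
qed

lemma pow_eq_mod:
  assumes a: "a \<in> carrier G" and e: "k mod ord a = l mod ord a"
  shows "a [^] (k::nat) = a [^] (l::nat)"
proof -
  have "a [^] k = a [^] (k mod ord a)" by (rule pow_mod_ord[OF a])
  also have "\<dots> = a [^] (l mod ord a)" using e by simp
  also have "\<dots> = a [^] l" by (rule sym[OF pow_mod_ord[OF a]])
  finally show ?thesis .
qed

lemma omega:
  fixes p :: nat
  assumes p: "Factorial_Ring.prime p" and a: "a \<in> carrier G"
    and bp: "(a [^] (\<beta>::nat)) [^] p = \<one>" and zp: "(a [^] (\<zeta>::nat)) [^] p = \<one>"
    and z1: "a [^] \<zeta> \<noteq> \<one>"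
  shows "\<exists>i::nat. a [^] \<beta> = (a [^] \<zeta>) [^] i"
proof -
  have h1: "ord a dvd \<beta> * p" using bp a by (simp add: nat_pow_pow pow_eq_id)
  have h2: "ord a dvd \<zeta> * p" using zp a by (simp add: nat_pow_pow pow_eq_id)
  have h3: "\<not> ord a dvd \<zeta>" using z1 a by (simp add: pow_eq_id)
  obtain i where "(\<zeta> * i) mod ord a = \<beta> mod ord a" using nt_omega[OF p h1 h2 h3] by blast
  then have "a [^] (\<zeta> * i) = a [^] \<beta>" using a pow_eq_mod by blast
  then have "a [^] \<beta> = (a [^] \<zeta>) [^] i" using nat_pow_pow[OF a, of \<zeta> i] by simp
  then show ?thesis by blast
qed

lemma int_pow_nat_ex: "finite (carrier G) \<Longrightarrow> x \<in> carrier G \<Longrightarrow> \<exists>n::nat. x [^] (i::int) = x [^] n"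
proof -
  assume f: "finite (carrier G)" and x: "x \<in> carrier G"
  have o: "ord x \<ge> 1" using ord_ge_1[OF f x] .
  have e: "int (nat (i mod int (ord x))) = i mod int (ord x)" using o by simp
  have "int (ord x) dvd (i - i mod int (ord x))" by (rule dvd_minus_mod)
  then have "int (ord x) dvd -(i - i mod int (ord x))" by (simp only: dvd_minus_iff)
  then have d: "int (ord x) dvd (i mod int (ord x) - i)" by simp
  have "x [^] i = x [^] (int (nat (i mod int (ord x))))"
    by (simp only: int_pow_eq[OF x] e d)
  then have "x [^] i = x [^] (nat (i mod int (ord x)))" by (simp only: int_pow_int)
  then show ?thesis by (rule exI)
qed

lemma pow_comm2:
  assumes "x \<otimes> y = y \<otimes> x" "x \<in> carrier G" "y \<in> carrier G"
  shows "x [^] (n::nat) \<otimes> y [^] (m::nat) = y [^] m \<otimes> x [^] n"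
proof -
  have "x [^] n \<otimes> y = y \<otimes> x [^] n" by (rule group_commutes_pow[OF assms])
  then have "y \<otimes> x [^] n = x [^] n \<otimes> y" by simp
  then have "y [^] m \<otimes> x [^] n = x [^] n \<otimes> y [^] m" using group_commutes_pow[of y "x [^] n" m] assms by simp
  then show ?thesis by simp
qed

end

context group begin

lemma zt_mult:
  assumes z: "z \<in> carrier G" and t: "t \<in> carrier G" and c: "z \<otimes> t = t \<otimes> z"
  shows "(z [^] (i::nat) \<otimes> t [^] (j::nat)) \<otimes> (z [^] (k::nat) \<otimes> t [^] (l::nat)) = z [^] (i + k) \<otimes> t [^] (j + l)"
proof -
  have tz: "t [^] j \<otimes> z [^] k = z [^] k \<otimes> t [^] j" using pow_comm2[OF c z t] by simp
  have "(z [^] i \<otimes> t [^] j) \<otimes> (z [^] k \<otimes> t [^] l) = z [^] i \<otimes> ((t [^] j \<otimes> z [^] k) \<otimes> t [^] l)"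
    using z t by (simp add: m_assoc)
  also have "\<dots> = z [^] i \<otimes> ((z [^] k \<otimes> t [^] j) \<otimes> t [^] l)" by (simp only: tz)
  also have "\<dots> = (z [^] i \<otimes> z [^] k) \<otimes> (t [^] j \<otimes> t [^] l)" using z t by (simp add: m_assoc)
  also have "\<dots> = z [^] (i + k) \<otimes> t [^] (j + l)" using z t by (simp add: nat_pow_mult)
  finally show ?thesis .
qed

lemma E_props:
  assumes z: "z \<in> carrier G" and t: "t \<in> carrier G" and c: "z \<otimes> t = t \<otimes> z"
    and zp: "z [^] p = \<one>" and tp: "t [^] (p::nat) = \<one>" and p0: "p > 0"
    and E: "E = {z [^] (i::nat) \<otimes> t [^] (j::nat) | i j. True}"
  shows "subgroup E G" "\<And>x y. x \<in> E \<Longrightarrow> y \<in> E \<Longrightarrow> x \<otimes> y = y \<otimes> x"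
    "\<And>y. y \<in> E \<Longrightarrow> y [^] p = \<one>" "z \<in> E" "t \<in> E"
proof -
  have sub: "E \<subseteq> carrier G" using E z t by auto
  have mult: "x \<otimes> y \<in> E" if xE: "x \<in> E" and yE: "y \<in> E" for x y
  proof -
    obtain i j :: nat where x: "x = z [^] i \<otimes> t [^] j" using xE unfolding E by blast
    obtain k l :: nat where y: "y = z [^] k \<otimes> t [^] l" using yE unfolding E by blast
    show ?thesis unfolding x y zt_mult[OF z t c] E by blast
  qed
  have inv: "inv x \<in> E" if xE: "x \<in> E" for x
  proof -
    obtain i j :: nat where x: "x = z [^] i \<otimes> t [^] j" using xE unfolding E by blast
    have "(z [^] (i * (p - 1)) \<otimes> t [^] (j * (p - 1))) \<otimes> x = z [^] (i * (p - 1) + i) \<otimes> t [^] (j * (p - 1) + j)"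
      unfolding x zt_mult[OF z t c] ..
    also have "i * (p - 1) + i = p * i" using p0 by (simp add: algebra_simps)
    also have "j * (p - 1) + j = p * j" using p0 by (simp add: algebra_simps)
    also have "z [^] (p * i) \<otimes> t [^] (p * j) = \<one>" using z t zp tp by (simp add: nat_pow_pow[symmetric])
    finally have "inv x = z [^] (i * (p - 1)) \<otimes> t [^] (j * (p - 1))"
      using x z t by (intro inv_equality) auto
    then show ?thesis using E by blast
  qed
  have "\<one> = z [^] (0::nat) \<otimes> t [^] (0::nat)" using z t by simp
  then have "\<one> \<in> E" unfolding E by blast
  then show "subgroup E G" using sub mult inv by (intro subgroupI) auto
  show "x \<otimes> y = y \<otimes> x" if xE: "x \<in> E" and yE: "y \<in> E" for x y
  proof -
    obtain i j :: nat where x: "x = z [^] i \<otimes> t [^] j" using xE unfolding E by blast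
    obtain k l :: nat where y: "y = z [^] k \<otimes> t [^] l" using yE unfolding E by blast
    show ?thesis unfolding x y zt_mult[OF z t c] by (simp add: add.commute)
  qed
  show "y [^] p = \<one>" if yE: "y \<in> E" for y
  proof -
    obtain i j :: nat where y: "y = z [^] i \<otimes> t [^] j" using yE unfolding E by blast
    have c2: "z [^] i \<otimes> t [^] j = t [^] j \<otimes> z [^] i" using pow_comm2[OF c z t] .
    have "y [^] p = (z [^] i) [^] p \<otimes> (t [^] j) [^] p" unfolding y by (rule pow_mult_distrib[OF c2]) (use z t in auto)
    also have "\<dots> = \<one>" using z t zp tp by (simp add: nat_pow_pow mult.commute[of i] mult.commute[of j] nat_pow_pow[symmetric])
    finally show ?thesis .
  qed
  have "z = z [^] (1::nat) \<otimes> t [^] (0::nat)" using z t by simp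
  then show "z \<in> E" unfolding E by blast
  have "t = z [^] (0::nat) \<otimes> t [^] (1::nat)" using z t by simp
  then show "t \<in> E" unfolding E by blast
qed

lemma E_not_cyclic:
  assumes z: "z \<in> carrier G" and t: "t \<in> carrier G" and c: "z \<otimes> t = t \<otimes> z"
    and zp: "z [^] p = \<one>" and tp: "t [^] (p::nat) = \<one>" and p: "Factorial_Ring.prime p"
    and E: "E = {z [^] (i::nat) \<otimes> t [^] (j::nat) | i j. True}"
    and z1: "z \<noteq> \<one>" and tz: "\<And>i::nat. t \<noteq> z [^] i" and fin: "finite (carrier G)"
  shows "\<not> cyclic_group (G\<lparr>carrier := E\<rparr>)"
proof
  assume cyc: "cyclic_group (G\<lparr>carrier := E\<rparr>)"
  have p0: "p > 0" using p prime_gt_0_nat by blast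
  note EP = E_props[OF z t c zp tp p0 E]
  have sg: "subgroup E G" by (rule EP(1))
  have "\<exists>x \<in> carrier (G\<lparr>carrier := E\<rparr>). carrier (G\<lparr>carrier := E\<rparr>) = range (\<lambda>n::int. x [^]\<^bsub>G\<lparr>carrier := E\<rparr>\<^esub> n)"
    using cyc group.cyclic_group[OF subgroup_imp_group[OF sg]] by (simp only:)
  then obtain g where gE0: "g \<in> carrier (G\<lparr>carrier := E\<rparr>)" and rng0: "carrier (G\<lparr>carrier := E\<rparr>) = range (\<lambda>n::int. g [^]\<^bsub>G\<lparr>carrier := E\<rparr>\<^esub> n)"
    by blast
  have gE: "g \<in> E" using gE0 by simp
  have cE: "carrier (G\<lparr>carrier := E\<rparr>) = E" by simp
  have rng: "E = range (\<lambda>n::int. g [^]\<^bsub>G\<lparr>carrier := E\<rparr>\<^esub> n)" using rng0 unfolding cE .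
  have g: "g \<in> carrier G" by (rule subgroup.mem_carrier[OF sg gE])
  have gp: "g [^] p = \<one>" using EP(3)[OF gE] .
  have "z \<in> range (\<lambda>n::int. g [^]\<^bsub>G\<lparr>carrier := E\<rparr>\<^esub> n)" using EP(4) rng by (simp only:)
  then obtain ea where "z = g [^]\<^bsub>G\<lparr>carrier := E\<rparr>\<^esub> (ea::int)" by blast
  then have zea: "z = g [^] (ea::int)" by (simp only: int_pow_consistent[OF sg gE])
  obtain a where "g [^] ea = g [^] (a::nat)" using int_pow_nat_ex[OF fin g] by blast
  then have za: "z = g [^] a" using zea by simp
  have "t \<in> range (\<lambda>n::int. g [^]\<^bsub>G\<lparr>carrier := E\<rparr>\<^esub> n)" using EP(5) rng by (simp only:)
  then obtain eb where "t = g [^]\<^bsub>G\<lparr>carrier := E\<rparr>\<^esub> (eb::int)" by blast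
  then have teb: "t = g [^] (eb::int)" by (simp only: int_pow_consistent[OF sg gE])
  obtain b where "g [^] eb = g [^] (b::nat)" using int_pow_nat_ex[OF fin g] by blast
  then have tb: "t = g [^] b" using teb by simp
  have od: "ord g dvd p" using gp g by (simp add: pow_eq_id)
  have "g \<noteq> \<one>" using z1 za by auto
  then have "ord g \<noteq> 1" using g ord_eq_1 by blast
  then have op: "ord g = p" using od p unfolding prime_nat_iff by blast
  have "\<not> p dvd a" using z1 za op g by (simp add: pow_eq_id)
  then have a0: "a \<noteq> 0" by (metis dvd_0_right)
  have "coprime p a" using p \<open>\<not> p dvd a\<close> by (simp add: prime_imp_coprime)
  then have gcd1: "gcd a p = 1" by (simp add: coprime_commute)
  obtain x y where xy: "a * x = p * y + gcd a p" using bezout_nat[OF a0] by blast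
  have ax: "a * x = 1 + p * y" using xy gcd1 by simp
  have "(1 + p * y) mod p = 1 mod p" by (rule mod_mult_self2)
  then have "(a * x) mod ord g = 1 mod ord g" using ax op by simp
  then have "g [^] (a * x) = g [^] (1::nat)" using pow_eq_mod[OF g] by blast
  then have "z [^] x = g" using za g by (simp add: nat_pow_pow)
  then have "t = (z [^] x) [^] b" using tb by simp
  then have "t = z [^] (x * b)" using z by (simp add: nat_pow_pow)
  then show False using tz by blast
qed

end

fun tri :: "nat \<Rightarrow> nat" where
  "tri 0 = 0" | "tri (Suc k) = tri k + Suc k"

lemma tri_eq: "2 * tri k = k * (k + 1)"
  by (induction k) (auto simp: algebra_simps)

locale rq0 = group G for G (structure) +
  fixes p n :: nat and A a
  assumes fin: "finite (carrier G)" and ordG: "order G = p ^ n" and prime: "Factorial_Ring.prime p"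
    and An: "A \<lhd> G" and a: "a \<in> carrier G" and Aeq: "A = range (\<lambda>k::nat. a [^] k)"
    and cent: "\<And>x. x \<in> carrier G \<Longrightarrow> x \<otimes> a = a \<otimes> x \<Longrightarrow> x \<in> A"
begin

lemma Asub: "A \<subseteq> carrier G" using Aeq a by auto

lemma Apow: "x \<in> A \<Longrightarrow> \<exists>k::nat. x = a [^] k" using Aeq by auto

lemma powA: "a [^] (k::nat) \<in> A" using Aeq by auto

lemma A_comm: "x \<in> A \<Longrightarrow> y \<in> A \<Longrightarrow> x \<otimes> y = y \<otimes> x"
proof -
  assume "x \<in> A" "y \<in> A"
  then obtain i j :: nat where "x = a [^] i" "y = a [^] j" using Apow by blast
  then show ?thesis using a by (simp add: nat_pow_mult add.commute)
qed

lemma A_mult: "x \<in> A \<Longrightarrow> y \<in> A \<Longrightarrow> x \<otimes> y \<in> A"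
proof -
  assume "x \<in> A" "y \<in> A"
  then obtain i j :: nat where "x = a [^] i" "y = a [^] j" using Apow by blast
  then show ?thesis using a powA by (simp add: nat_pow_mult)
qed

lemma A_pow: "x \<in> A \<Longrightarrow> x [^] (k::nat) \<in> A"
proof -
  assume "x \<in> A"
  then obtain i :: nat where "x = a [^] i" using Apow by blast
  then show ?thesis using a powA by (simp add: nat_pow_pow)
qed

lemma A_sub: "subgroup A G" by (rule normal_imp_subgroup[OF An])

lemma A_inv: "x \<in> A \<Longrightarrow> inv x \<in> A" by (rule subgroup.m_inv_closed[OF A_sub])

lemma conj_A: "x \<in> carrier G \<Longrightarrow> b \<in> A \<Longrightarrow> x \<otimes> b \<otimes> inv x \<in> A"
  by (rule normal.inv_op_closed2[OF An])

lemma power_map: "x \<in> carrier G \<Longrightarrow> \<exists>r::nat. \<forall>b\<in>A. x \<otimes> b \<otimes> inv x = b [^] r"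
proof -
  assume x: "x \<in> carrier G"
  have "x \<otimes> a \<otimes> inv x \<in> A" using conj_A[OF x] powA[of 1] a by simp
  then obtain r :: nat where r: "x \<otimes> a \<otimes> inv x = a [^] r" using Apow by blast
  have "x \<otimes> b \<otimes> inv x = b [^] r" if "b \<in> A" for b
  proof -
    obtain k :: nat where k: "b = a [^] k" using Apow \<open>b \<in> A\<close> by blast
    have "x \<otimes> b \<otimes> inv x = (x \<otimes> a \<otimes> inv x) [^] k" unfolding k by (rule conj_pow[OF x a])
    also have "\<dots> = a [^] (r * k)" unfolding r using a by (simp add: nat_pow_pow)
    also have "\<dots> = b [^] r" unfolding k using a by (simp add: nat_pow_pow mult.commute)
    finally show ?thesis .
  qed
  then show ?thesis by blast
qed

end

locale rq = rq0 +
  fixes t z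
  assumes t: "t \<in> carrier G" and tp: "t [^] p = \<one>" and zA: "z \<in> A" and z1: "z \<noteq> \<one>"
    and zp: "z [^] p = \<one>" and ta: "t \<otimes> a \<otimes> inv t = z \<otimes> a" and tz: "t \<otimes> z = z \<otimes> t"
begin

lemma z: "z \<in> carrier G" using zA Asub by auto

lemma t_notin_A: "t \<notin> A"
proof
  assume "t \<in> A"
  then have "t \<otimes> a = a \<otimes> t" using A_comm powA[of 1] a by simp
  then have "t \<otimes> a \<otimes> inv t = a" using t a by (simp add: m_assoc)
  then have "z \<otimes> a = a" using ta by simp
  then show False using z a z1 by simp
qed

lemma inv_t_conj: "inv t \<otimes> a \<otimes> t = inv z \<otimes> a"
proof -
  have "inv t \<otimes> (t \<otimes> a \<otimes> inv t) \<otimes> t = a" using t a by (simp add: m_assoc)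
  then have "inv t \<otimes> (z \<otimes> a) \<otimes> t = a" using ta by simp
  moreover have "inv t \<otimes> (z \<otimes> a) \<otimes> t = z \<otimes> (inv t \<otimes> a \<otimes> t)"
  proof -
    have "inv t \<otimes> (t \<otimes> z) \<otimes> inv t = inv t \<otimes> (z \<otimes> t) \<otimes> inv t" using tz by simp
    then have "inv t \<otimes> z = z \<otimes> inv t" using t z by (simp add: m_assoc)
    then show ?thesis using t z a by (simp add: m_assoc[symmetric])
  qed
  ultimately have "z \<otimes> (inv t \<otimes> a \<otimes> t) = a" by simp
  then show ?thesis using z t a inv_solve_left[of "inv t \<otimes> a \<otimes> t" z a] by simp
qed

end

context group begin
lemma conj_fix_comm: "y \<in> carrier G \<Longrightarrow> b \<in> carrier G \<Longrightarrow> y \<otimes> b \<otimes> inv y = b \<Longrightarrow> y \<otimes> b = b \<otimes> y"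
proof -
  assume y: "y \<in> carrier G" and b: "b \<in> carrier G" and e: "y \<otimes> b \<otimes> inv y = b"
  have "y \<otimes> b \<otimes> inv y \<otimes> y = b \<otimes> y" using e by simp
  then show ?thesis using y b by (simp add: m_assoc)
qed

lemma conj_cancel: "x \<in> carrier G \<Longrightarrow> u \<in> carrier G \<Longrightarrow> v \<in> carrier G \<Longrightarrow> x \<otimes> u \<otimes> inv x = x \<otimes> v \<otimes> inv x \<Longrightarrow> u = v"
proof -
  assume x: "x \<in> carrier G" and u: "u \<in> carrier G" and v: "v \<in> carrier G" and e: "x \<otimes> u \<otimes> inv x = x \<otimes> v \<otimes> inv x"
  have "inv x \<otimes> (x \<otimes> u \<otimes> inv x) \<otimes> x = inv x \<otimes> (x \<otimes> v \<otimes> inv x) \<otimes> x" using e by simp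
  then show ?thesis using x u v by (simp add: m_assoc)
qed

lemma pow_mod_of: "b \<in> carrier G \<Longrightarrow> b [^] (k::nat) = \<one> \<Longrightarrow> b [^] (j::nat) = b [^] (j mod k)"
proof -
  assume b: "b \<in> carrier G" and k: "b [^] k = \<one>"
  have "b [^] j = b [^] (j mod k + k * (j div k))" by simp
  also have "\<dots> = b [^] (j mod k) \<otimes> (b [^] k) [^] (j div k)" using b by (simp only: nat_pow_pow nat_pow_mult)
  also have "\<dots> = b [^] (j mod k)" using b k by simp
  finally show ?thesis .
qed
end

context rq begin

lemma inv_z_pow: "inv z = z [^] (p - 1)"
proof -
  have p0: "p > 0" using prime prime_gt_0_nat by blast
  have "z [^] (p - 1) \<otimes> z = z [^] p" using z p0 by (simp add: nat_pow_Suc[symmetric] del: nat_pow_Suc)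
  then have "z [^] (p - 1) \<otimes> z = \<one>" using zp by simp
  then show ?thesis using z by (intro inv_equality) auto
qed

lemma tz_pow: "t \<otimes> z [^] (j::nat) = z [^] j \<otimes> t"
  using group_commutes_pow[of z t j] tz z t by simp

lemma powA_conj_t: "\<exists>j::nat. a [^] (i::nat) \<otimes> t \<otimes> inv (a [^] i) = t \<otimes> z [^] j"
proof -
  have za: "inv z \<otimes> a = a \<otimes> inv z"
  proof -
    have "z \<otimes> a = a \<otimes> z" using A_comm zA powA[of 1] a by simp
    then have "inv z \<otimes> (z \<otimes> a) \<otimes> inv z = inv z \<otimes> (a \<otimes> z) \<otimes> inv z" by simp
    then show ?thesis using z a by (simp add: m_assoc)
  qed
  have "inv t \<otimes> a [^] i \<otimes> inv (inv t) = (inv t \<otimes> a \<otimes> inv (inv t)) [^] i" using conj_pow[of "inv t" a i] t a by simp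
  then have "inv t \<otimes> a [^] i \<otimes> t = (inv z \<otimes> a) [^] i" using inv_t_conj t by simp
  also have "\<dots> = inv z [^] i \<otimes> a [^] i" using pow_mult_distrib[OF za] z a by simp
  finally have e: "inv t \<otimes> a [^] i \<otimes> t = inv z [^] i \<otimes> a [^] i" .
  have "a [^] i \<otimes> t \<otimes> inv (a [^] i) = t \<otimes> (inv t \<otimes> a [^] i \<otimes> t) \<otimes> inv (a [^] i)"
    using t a by (simp add: m_assoc)
  also have "\<dots> = t \<otimes> inv z [^] i" using e t a z by (simp add: m_assoc)
  also have "\<dots> = t \<otimes> z [^] ((p - 1) * i)" using inv_z_pow z by (simp add: nat_pow_pow)
  finally show ?thesis by blast
qed

lemma pow_formula:
  assumes cA: "c \<in> A" and wA: "w \<in> A" and tc: "t \<otimes> c \<otimes> inv t = w \<otimes> c" and tw: "t \<otimes> w = w \<otimes> t"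
  shows "(t \<otimes> c) [^] (k::nat) = c [^] k \<otimes> w [^] (tri k) \<otimes> t [^] k"
proof -
  have c: "c \<in> carrier G" and w: "w \<in> carrier G" using cA wA Asub by auto
  have tc': "t \<otimes> c = w \<otimes> c \<otimes> t"
  proof -
    have "t \<otimes> c \<otimes> inv t \<otimes> t = w \<otimes> c \<otimes> t" using tc by simp
    then show ?thesis using t c w by (simp add: m_assoc)
  qed
  have tmc: "t [^] m \<otimes> c = c \<otimes> w [^] m \<otimes> t [^] m" for m :: nat
  proof (induction m)
    case 0 then show ?case using c by simp
  next
    case (Suc m)
    have wm: "t [^] m \<otimes> w = w \<otimes> t [^] m" using group_commutes_pow[OF tw t w] by simp
    have cw: "c \<otimes> w = w \<otimes> c" using A_comm cA wA by simp
    have "t [^] Suc m \<otimes> c = t [^] m \<otimes> (t \<otimes> c)" using t c by (simp add: m_assoc)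
    also have "\<dots> = t [^] m \<otimes> w \<otimes> c \<otimes> t" using tc' t c w by (simp add: m_assoc)
    also have "\<dots> = w \<otimes> (t [^] m \<otimes> c) \<otimes> t" using wm t c w by (simp add: m_assoc)
    also have "\<dots> = w \<otimes> c \<otimes> w [^] m \<otimes> t [^] m \<otimes> t" using Suc t c w by (simp add: m_assoc)
    also have "\<dots> = c \<otimes> (w \<otimes> w [^] m) \<otimes> (t [^] m \<otimes> t)" using cw[symmetric] t c w by (simp add: m_assoc[symmetric])
    also have "\<dots> = c \<otimes> w [^] Suc m \<otimes> t [^] Suc m" using w t by (simp add: nat_pow_Suc2[symmetric] del: nat_pow_Suc)
    finally show ?case .
  qed
  show ?thesis
  proof (induction k)
    case 0 then show ?case by simp
  next
    case (Suc k)
    have cwk: "w [^] (tri k) \<otimes> c = c \<otimes> w [^] (tri k)"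
      using A_comm[OF A_pow[OF wA] cA] by simp
    have "(t \<otimes> c) [^] Suc k = c [^] k \<otimes> w [^] (tri k) \<otimes> (t [^] k \<otimes> t \<otimes> c)"
      using Suc t c w by (simp add: m_assoc)
    also have "t [^] k \<otimes> t \<otimes> c = t [^] Suc k \<otimes> c" by simp
    also have "\<dots> = c \<otimes> w [^] Suc k \<otimes> t [^] Suc k" by (rule tmc)
    also have "c [^] k \<otimes> w [^] (tri k) \<otimes> (c \<otimes> w [^] Suc k \<otimes> t [^] Suc k)
        = c [^] k \<otimes> (w [^] (tri k) \<otimes> c) \<otimes> (w [^] Suc k \<otimes> t [^] Suc k)"
      using t c w by (simp add: m_assoc del: nat_pow_Suc)
    also have "\<dots> = c [^] k \<otimes> (c \<otimes> w [^] (tri k)) \<otimes> (w [^] Suc k \<otimes> t [^] Suc k)"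
      by (simp only: cwk)
    also have "\<dots> = (c [^] k \<otimes> c) \<otimes> (w [^] (tri k) \<otimes> w [^] Suc k) \<otimes> t [^] Suc k"
      using t c w by (simp add: m_assoc del: nat_pow_Suc)
    also have "\<dots> = c [^] Suc k \<otimes> w [^] (tri (Suc k)) \<otimes> t [^] Suc k"
    proof -
      have e1: "w [^] (tri k) \<otimes> w [^] (Suc k) = w [^] (tri (Suc k))"
        using nat_pow_mult[OF w, of "tri k" "Suc k"] by simp
      have e2: "c [^] k \<otimes> c = c [^] Suc k" by simp
      show ?thesis by (simp only: e1 e2)
    qed
    finally show ?case .
  qed
qed

end

context group begin
lemma conj_one: "x \<in> carrier G \<Longrightarrow> b \<in> carrier G \<Longrightarrow> x \<otimes> b \<otimes> inv x = \<one> \<Longrightarrow> b = \<one>"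
  using conj_cancel[of x b \<one>] by simp
end

context rq begin

lemma conj_by_t_form: "x \<in> carrier G \<Longrightarrow> x \<otimes> a \<otimes> inv x = t \<otimes> a \<otimes> inv t \<Longrightarrow> \<exists>i::nat. x \<otimes> t \<otimes> inv x = t \<otimes> z [^] i"
proof -
  assume x: "x \<in> carrier G" and e: "x \<otimes> a \<otimes> inv x = t \<otimes> a \<otimes> inv t"
  define y where "y = inv t \<otimes> x"
  have y: "y \<in> carrier G" unfolding y_def using x t by simp
  have "y \<otimes> a \<otimes> inv y = inv t \<otimes> (x \<otimes> a \<otimes> inv x) \<otimes> t"
    unfolding y_def using x t a by (simp add: m_assoc inv_mult_group)
  also have "\<dots> = a" unfolding e using t a by (simp add: m_assoc)
  finally have "y \<otimes> a = a \<otimes> y" using conj_fix_comm y a by blast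
  then have "y \<in> A" using cent y by blast
  then obtain i :: nat where yi: "y = a [^] i" using Apow by blast
  have xe: "x = t \<otimes> a [^] i" using yi unfolding y_def using x t a by (simp add: inv_solve_left')
  obtain j :: nat where j: "a [^] i \<otimes> t \<otimes> inv (a [^] i) = t \<otimes> z [^] j" using powA_conj_t by blast
  have "x \<otimes> t \<otimes> inv x = t \<otimes> (a [^] i \<otimes> t \<otimes> inv (a [^] i)) \<otimes> inv t"
    unfolding xe using t a by (simp add: m_assoc inv_mult_group)
  also have "\<dots> = t \<otimes> (t \<otimes> z [^] j) \<otimes> inv t" unfolding j ..
  also have "\<dots> = t \<otimes> (z [^] j \<otimes> t) \<otimes> inv t" using tz_pow by simp
  also have "\<dots> = t \<otimes> z [^] j" using t z by (simp add: m_assoc)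
  finally show ?thesis by blast
qed

lemma small_case:
  assumes p2: "p = 2" and a4: "a [^] (4::nat) = \<one>" and x: "x \<in> carrier G"
  shows "\<exists>i::nat. x \<otimes> t \<otimes> inv x = t \<otimes> z [^] i"
proof -
  obtain \<zeta> :: nat where zz: "z = a [^] \<zeta>" using Apow zA by blast
  have z2: "z [^] (2::nat) = \<one>" using zp p2 by simp
  have sq: "b [^] (2::nat) = b \<otimes> b" if "b \<in> carrier G" for b using that by (simp add: numeral_2_eq_2)
  have a2: "a [^] (2::nat) \<noteq> \<one>"
  proof
    assume h: "a [^] (2::nat) = \<one>"
    have zm: "z = a [^] (\<zeta> mod 2)" using pow_mod_of[OF a h] zz by simp
    have "\<zeta> mod 2 \<noteq> 0"
    proof
      assume "\<zeta> mod 2 = 0"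
      then have "z = \<one>" using zm by simp
      then show False using z1 by simp
    qed
    then have "\<zeta> mod 2 = 1" by presburger
    then have za: "z = a" using zm a by simp
    have "t \<otimes> a \<otimes> inv t = \<one>" using ta za h sq a by simp
    then have "a = \<one>" using conj_one t a by blast
    then show False using za z1 by simp
  qed
  have zeq: "z = a [^] (2::nat)"
  proof -
    have zm: "z = a [^] (\<zeta> mod 4)" using pow_mod_of[OF a a4] zz by simp
    have lt: "\<zeta> mod 4 < 4" by simp
    consider "\<zeta> mod 4 = 0" | "\<zeta> mod 4 = 1" | "\<zeta> mod 4 = 2" | "\<zeta> mod 4 = 3" using lt by linarith
    then show ?thesis
    proof cases
      case 1 then show ?thesis using zm z1 by simp
    next
      case 2
      then have "z = a" using zm a by simp
      then show ?thesis using z2 a2 by simp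
    next
      case 3 then show ?thesis using zm by simp
    next
      case 4
      then have "z = a [^] (3::nat)" using zm by simp
      then have "z [^] (2::nat) = a [^] (6::nat)" using a by (simp add: nat_pow_pow)
      also have "\<dots> = a [^] ((6::nat) mod 4)" by (rule pow_mod_of[OF a a4])
      finally have "z [^] (2::nat) = a [^] (2::nat)" by simp
      then show ?thesis using z2 a2 by simp
    qed
  qed
  obtain r :: nat where pm: "\<forall>b\<in>A. x \<otimes> b \<otimes> inv x = b [^] r" using power_map[OF x] by blast
  have aA: "a \<in> A" using powA[of 1] a by simp
  have xar: "x \<otimes> a \<otimes> inv x = a [^] (r mod 4)" using pm aA pow_mod_of[OF a a4] by simp
  have xa2: "x \<otimes> a [^] (2::nat) \<otimes> inv x = (x \<otimes> a \<otimes> inv x) [^] (2::nat)" using conj_pow x a by blast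
  have lt: "r mod 4 < 4" by simp
  consider "r mod 4 = 0" | "r mod 4 = 1" | "r mod 4 = 2" | "r mod 4 = 3" using lt by linarith
  then show ?thesis
  proof cases
    case 1
    then have "x \<otimes> a [^] (2::nat) \<otimes> inv x = \<one>" using xa2 xar by simp
    then have "a [^] (2::nat) = \<one>" using conj_one x a by blast
    then show ?thesis using a2 by blast
  next
    case 3
    then have "x \<otimes> a [^] (2::nat) \<otimes> inv x = (a [^] (2::nat)) [^] (2::nat)" using xa2 xar by simp
    also have "\<dots> = \<one>" using a a4 by (simp add: nat_pow_pow)
    finally have "a [^] (2::nat) = \<one>" using conj_one x a by blast
    then show ?thesis using a2 by blast
  next
    case 2
    then have "x \<otimes> a \<otimes> inv x = a" using xar a by simp
    then have "x \<otimes> a = a \<otimes> x" using conj_fix_comm x a by blast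
    then have "x \<in> A" using cent x by blast
    then obtain i :: nat where xi: "x = a [^] i" using Apow by blast
    show ?thesis unfolding xi using powA_conj_t by blast
  next
    case 4
    then have "x \<otimes> a \<otimes> inv x = a [^] (3::nat)" using xar by simp
    also have "\<dots> = a [^] (2::nat) \<otimes> a" using a by (simp add: numeral_3_eq_3 numeral_2_eq_2)
    also have "\<dots> = t \<otimes> a \<otimes> inv t" using ta zeq by simp
    finally show ?thesis using conj_by_t_form x by blast
  qed
qed

end

context rq begin

lemma conj_t:
  assumes x: "x \<in> carrier G"
  shows "\<exists>i::nat. x \<otimes> t \<otimes> inv x = t \<otimes> z [^] i"
proof -
  obtain r :: nat where pm: "\<forall>b\<in>A. x \<otimes> b \<otimes> inv x = b [^] r" using power_map[OF x] by blast
  define t' where "t' = x \<otimes> t \<otimes> inv x"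
  have t'c: "t' \<in> carrier G" unfolding t'_def using x t by simp
  define u where "u = t' \<otimes> a \<otimes> inv t'"
  have aA: "a \<in> A" using powA[of 1] a by simp
  have zaA: "z \<otimes> a \<in> A" using A_mult zA aA by blast
  have uA: "u \<in> A" unfolding u_def using conj_A[OF t'c aA] .
  have u: "u \<in> carrier G" using uA Asub by blast
  have e1: "t' \<otimes> (x \<otimes> a \<otimes> inv x) \<otimes> inv t' = x \<otimes> (t \<otimes> a \<otimes> inv t) \<otimes> inv x"
    unfolding t'_def using x t a by (simp add: m_assoc inv_mult_group)
  have xa: "x \<otimes> a \<otimes> inv x = a [^] r" using pm aA by blast
  have e2: "t' \<otimes> (x \<otimes> a \<otimes> inv x) \<otimes> inv t' = u [^] r"
    unfolding xa u_def by (rule conj_pow[OF t'c a])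
  have "u [^] r = x \<otimes> (z \<otimes> a) \<otimes> inv x" using e1 e2 ta by simp
  then have "x \<otimes> u \<otimes> inv x = x \<otimes> (z \<otimes> a) \<otimes> inv x" using pm uA by simp
  then have ue: "u = z \<otimes> a" using conj_cancel[OF x u] z a by simp
  define c where "c = inv t \<otimes> t'"
  have cc: "c \<in> carrier G" unfolding c_def using t t'c by simp
  have "c \<otimes> a \<otimes> inv c = inv t \<otimes> u \<otimes> t"
    unfolding c_def u_def using t t'c a by (simp add: m_assoc inv_mult_group)
  also have "\<dots> = inv t \<otimes> (t \<otimes> a \<otimes> inv t) \<otimes> t" using ue ta by simp
  also have "\<dots> = a" using t a by (simp add: m_assoc)
  finally have "c \<otimes> a = a \<otimes> c" using conj_fix_comm cc a by blast
  then have cA: "c \<in> A" using cent cc by blast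
  then obtain q :: nat where cq: "c = a [^] q" using Apow by blast
  define w where "w = z [^] q"
  have wA: "w \<in> A" unfolding w_def using A_pow zA by blast
  have w: "w \<in> carrier G" using wA Asub by blast
  have zacomm: "z \<otimes> a = a \<otimes> z" using A_comm zA aA by blast
  have "t \<otimes> c \<otimes> inv t = (t \<otimes> a \<otimes> inv t) [^] q" unfolding cq by (rule conj_pow[OF t a])
  also have "\<dots> = z [^] q \<otimes> a [^] q" using ta pow_mult_distrib[OF zacomm z a] by simp
  finally have tc: "t \<otimes> c \<otimes> inv t = w \<otimes> c" unfolding w_def cq .
  have tw: "t \<otimes> w = w \<otimes> t" unfolding w_def by (rule tz_pow)
  have t'eq: "t' = t \<otimes> c" unfolding c_def using t t'c by simp
  have "t' [^] p = x \<otimes> t [^] p \<otimes> inv x" unfolding t'_def using conj_pow[OF x t] by simp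
  then have t'p: "t' [^] p = \<one>" using tp x by simp
  have "(t \<otimes> c) [^] p = c [^] p \<otimes> w [^] (tri p) \<otimes> t [^] p" by (rule pow_formula[OF cA wA tc tw])
  then have key: "c [^] p \<otimes> w [^] (tri p) = \<one>" using t'p t'eq tp cc w by simp
  have wp: "w [^] p = \<one>" unfolding w_def using z zp by (simp add: nat_pow_pow mult.commute[of q] nat_pow_pow[symmetric])
  obtain \<zeta> :: nat where zz: "z = a [^] \<zeta>" using Apow zA by blast
  have fin_case: "\<exists>i::nat. x \<otimes> t \<otimes> inv x = t \<otimes> z [^] i" if cp: "c [^] p = \<one>"
  proof -
    have "\<exists>i::nat. a [^] q = (a [^] \<zeta>) [^] i"
      by (rule omega[OF prime a]) (use cp cq zp zz z1 in auto)
    then obtain i :: nat where "c = z [^] i" using cq zz by blast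
    then have "x \<otimes> t \<otimes> inv x = t \<otimes> z [^] i" using t'eq unfolding t'_def by simp
    then show ?thesis by blast
  qed
  show ?thesis
  proof (cases "p = 2")
    case False
    have p2: "p > 2" using False prime_ge_2_nat[OF prime] by linarith
    have "odd p" by (rule prime_odd_nat[OF prime p2])
    have "p dvd 2 * tri p" unfolding tri_eq by simp
    moreover have "coprime p 2" using \<open>odd p\<close> by (simp add: coprime_commute)
    ultimately have "p dvd tri p" using coprime_dvd_mult_right_iff[of p 2 "tri p"] by simp
    then obtain m where "tri p = p * m" by blast
    then have "w [^] (tri p) = \<one>" using wp w by (simp add: nat_pow_pow[symmetric])
    then have "c [^] p = \<one>" using key cc by simp
    then show ?thesis by (rule fin_case)
  next
    case True
    have t2: "tri p = 3" using True by (simp add: numeral_3_eq_3 numeral_2_eq_2)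
    have w2: "w [^] (2::nat) = \<one>" using wp True by simp
    have w3: "w [^] (3::nat) = w" using w2 w by (simp add: numeral_3_eq_3 numeral_2_eq_2 m_assoc)
    have key2: "c [^] (2::nat) \<otimes> w = \<one>" using key t2 w3 True by simp
    show ?thesis
    proof (cases "w = \<one>")
      case True
      then have "c [^] p = \<one>" using key2 \<open>p = 2\<close> cc by simp
      then show ?thesis by (rule fin_case)
    next
      case False
      have ic: "inv w = c [^] (2::nat)" using key2 w cc by (intro inv_equality) auto
      have "c [^] (4::nat) = (c [^] (2::nat)) [^] (2::nat)" using cc by (simp add: nat_pow_pow)
      also have "\<dots> = inv (w [^] (2::nat))" using ic[symmetric] w by (simp add: nat_pow_inv)
      finally have c4: "c [^] (4::nat) = \<one>" using w2 by simp
      then have "a [^] (q * 4) = \<one>" using cq a by (simp add: nat_pow_pow)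
      then have od: "ord a dvd q * 4" using a by (simp add: pow_eq_id)
      have "odd q"
      proof
        assume "even q"
        then obtain m where "q = 2 * m" by blast
        then have "w = (z [^] (2::nat)) [^] m" unfolding w_def using z by (simp add: nat_pow_pow)
        then show False using False zp \<open>p = 2\<close> by simp
      qed
      have "ord a dvd order G" by (rule ord_dvd_group_order[OF a])
      then have "ord a dvd 2 ^ n" using ordG \<open>p = 2\<close> by simp
      then obtain j where "ord a = 2 ^ j" using divides_primepow_nat[of 2] by auto
      then have "coprime (ord a) q" using \<open>odd q\<close> by (simp add: coprime_power_left_iff)
      then have "ord a dvd 4" using od coprime_dvd_mult_left_iff[of "ord a" q 4] by (simp add: mult.commute)
      then have "a [^] (4::nat) = \<one>" using a by (simp add: pow_eq_id)
      then show ?thesis using small_case \<open>p = 2\<close> x by blast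
    qed
  qed
qed

end

context group begin
lemma sub_pow: "subgroup H G \<Longrightarrow> h \<in> H \<Longrightarrow> h [^] (n::nat) \<in> H"
proof (induction n)
  case 0 then show ?case using subgroup.one_closed by simp
next
  case (Suc n) then show ?case using subgroup.m_closed[OF Suc(2)] by simp
qed
end

context rq begin

lemma rq_false:
  assumes R: "\<forall>E. E \<lhd> G \<and> comm_group (G\<lparr>carrier := E\<rparr>) \<longrightarrow> cyclic_group (G\<lparr>carrier := E\<rparr>)"
  shows False
proof -
  define E where "E = {z [^] (i::nat) \<otimes> t [^] (j::nat) | i j. True}"
  have p0: "p > 0" using prime prime_gt_0_nat by blast
  have c: "z \<otimes> t = t \<otimes> z" using tz by simp
  note EP = E_props[OF z t c zp tp p0 E_def]
  have sg: "subgroup E G" by (rule EP(1))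
  have zpE: "z [^] (k::nat) \<in> E" for k
  proof -
    have "z [^] k = z [^] k \<otimes> t [^] (0::nat)" using z by simp
    then show ?thesis unfolding E_def by blast
  qed
  have tzE: "t \<otimes> z [^] (k::nat) \<in> E" for k
  proof -
    have "t \<otimes> z [^] k = z [^] k \<otimes> t [^] (1::nat)" using tz_pow t by simp
    then show ?thesis unfolding E_def by blast
  qed
  have norm: "x \<otimes> h \<otimes> inv x \<in> E" if x: "x \<in> carrier G" and h: "h \<in> E" for x h
  proof -
    obtain i j :: nat where hij: "h = z [^] i \<otimes> t [^] j" using h unfolding E_def by blast
    obtain r :: nat where pm: "\<forall>b\<in>A. x \<otimes> b \<otimes> inv x = b [^] r" using power_map[OF x] by blast
    obtain k :: nat where k: "x \<otimes> t \<otimes> inv x = t \<otimes> z [^] k" using conj_t[OF x] by blast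
    have "x \<otimes> h \<otimes> inv x = (x \<otimes> z [^] i \<otimes> inv x) \<otimes> (x \<otimes> t [^] j \<otimes> inv x)"
      unfolding hij using conj_mult x z t by simp
    also have "\<dots> = (x \<otimes> z \<otimes> inv x) [^] i \<otimes> (x \<otimes> t \<otimes> inv x) [^] j"
      using conj_pow x z t by simp
    also have "\<dots> = (z [^] r) [^] i \<otimes> (t \<otimes> z [^] k) [^] j" using pm zA k by simp
    finally have e: "x \<otimes> h \<otimes> inv x = (z [^] r) [^] i \<otimes> (t \<otimes> z [^] k) [^] j" .
    have "(z [^] r) [^] i \<in> E" using sub_pow[OF sg zpE] .
    moreover have "(t \<otimes> z [^] k) [^] j \<in> E" using sub_pow[OF sg tzE] .
    ultimately show ?thesis unfolding e using subgroup.m_closed[OF sg] by simp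
  qed
  have nE: "E \<lhd> G" unfolding normal_inv_iff using sg norm by blast
  have grE: "group (G\<lparr>carrier := E\<rparr>)" by (rule subgroup_imp_group[OF sg])
  have cE: "comm_group (G\<lparr>carrier := E\<rparr>)"
    by (rule group.group_comm_groupI[OF grE]) (use EP(2) in simp)
  have cyc: "cyclic_group (G\<lparr>carrier := E\<rparr>)" using R nE cE by blast
  have tnz: "t \<noteq> z [^] i" for i :: nat
  proof
    assume "t = z [^] i"
    then have "t \<in> A" using A_pow zA by simp
    then show False using t_notin_A by simp
  qed
  show False using E_not_cyclic[OF z t c zp tp prime E_def z1 tnz fin] cyc by blast
qed

end

context group begin

lemma conj_set_iff:
  assumes g: "g \<in> carrier G"
  shows "y \<in> conj_set G g T \<longleftrightarrow> (\<exists>s\<in>T. y = g \<otimes> s \<otimes> inv g)"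
  unfolding conj_set_def l_coset_def r_coset_def by auto

lemma conj_set_one: "Y \<subseteq> carrier G \<Longrightarrow> conj_set G \<one> Y = Y"
  unfolding conj_set_def l_coset_def r_coset_def by (auto simp: subset_iff image_iff)

lemma normalizer_iff:
  assumes "T \<subseteq> carrier G"
  shows "g \<in> normalizer G T \<longleftrightarrow> g \<in> carrier G \<and> conj_set G g T = T"
  using assms unfolding normalizer_def stabilizer_def conj_set_def by auto

lemma conj_set_sub:
  assumes T: "subgroup T G" and s: "s \<in> T"
  shows "conj_set G s T = T"
proof -
  have sc: "s \<in> carrier G" using subgroup.mem_carrier[OF T s] .
  show ?thesis
  proof
    show "conj_set G s T \<subseteq> T"
    proof
      fix y assume "y \<in> conj_set G s T"
      then obtain u where u: "u \<in> T" and y: "y = s \<otimes> u \<otimes> inv s" using conj_set_iff[OF sc] by blast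
      show "y \<in> T" unfolding y using T s u by (simp add: subgroup.m_closed subgroup.m_inv_closed)
    qed
    show "T \<subseteq> conj_set G s T"
    proof
      fix y assume y: "y \<in> T"
      have yc: "y \<in> carrier G" using subgroup.mem_carrier[OF T y] .
      have "inv s \<otimes> y \<otimes> s \<in> T" using T s y by (simp add: subgroup.m_closed subgroup.m_inv_closed)
      moreover have "y = s \<otimes> (inv s \<otimes> y \<otimes> s) \<otimes> inv s" using sc yc by (simp add: m_assoc)
      ultimately show "y \<in> conj_set G s T" using conj_set_iff[OF sc] by blast
    qed
  qed
qed

end

context rq0 begin

lemma derive_tz:
  assumes T: "subgroup T G" and Tne: "T \<noteq> {\<one>}" and exp: "expansive G T"
    and core: "core_in G (carrier G) T = {\<one>}"
  shows "\<exists>t z. t \<in> carrier G \<and> t [^] p = \<one> \<and> z \<in> A \<and> z \<noteq> \<one> \<and> z [^] p = \<one>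
           \<and> t \<otimes> a \<otimes> inv t = z \<otimes> a \<and> t \<otimes> z = z \<otimes> t"
proof -
  have Tc: "T \<subseteq> carrier G" using subgroup.subset[OF T] .
  have aA: "a \<in> A" using powA[of 1] a by simp
  have TA: "h = \<one>" if hT: "h \<in> T" and hA: "h \<in> A" for h
  proof -
    have "h \<in> core_in G (carrier G) T"
      unfolding core_in_def
    proof (intro CollectI ballI)
      fix g assume g: "g \<in> carrier G"
      obtain r :: nat where pm: "\<forall>b\<in>A. inv g \<otimes> b \<otimes> inv (inv g) = b [^] r" using power_map[of "inv g"] g by auto
      have s: "inv g \<otimes> h \<otimes> g = h [^] r" using pm hA g by simp
      have sT: "inv g \<otimes> h \<otimes> g \<in> T" unfolding s using sub_pow[OF T hT] .
      have hc: "h \<in> carrier G" using hT Tc by blast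
      have "h = g \<otimes> (inv g \<otimes> h \<otimes> g) \<otimes> inv g" using g hc by (simp add: m_assoc)
      then show "h \<in> conj_set G g T" using conj_set_iff[OF g] sT by blast
    qed
    then show ?thesis using core by simp
  qed
  define N where "N = normalizer G T"
  have Nsub: "subgroup N G" unfolding N_def by (rule normalizer_imp_subgroup[OF Tc])
  have TN: "T \<subseteq> N"
  proof
    fix s assume s: "s \<in> T"
    then show "s \<in> N" unfolding N_def normalizer_iff[OF Tc] using conj_set_sub[OF T s] Tc by blast
  qed
  \<comment> \<open>commutator trick\<close>
  have comm_NA: "b \<otimes> s = s \<otimes> b" if bN: "b \<in> N" and bA: "b \<in> A" and sT: "s \<in> T" for b s
  proof -
    have b: "b \<in> carrier G" using bA Asub by blast
    have sc: "s \<in> carrier G" using sT Tc by blast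
    have "conj_set G b T = T" using bN unfolding N_def normalizer_iff[OF Tc] by blast
    then have "b \<otimes> s \<otimes> inv b \<in> T" using conj_set_iff[OF b] sT by blast
    then have c1: "b \<otimes> s \<otimes> inv b \<otimes> inv s \<in> T" using T sT by (simp add: subgroup.m_closed subgroup.m_inv_closed)
    have "s \<otimes> inv b \<otimes> inv s \<in> A" using conj_A[OF sc A_inv[OF bA]] .
    then have "b \<otimes> (s \<otimes> inv b \<otimes> inv s) \<in> A" using A_mult bA by blast
    then have c2: "b \<otimes> s \<otimes> inv b \<otimes> inv s \<in> A" using b sc by (simp add: m_assoc)
    have "b \<otimes> s \<otimes> inv b \<otimes> inv s = \<one>" using TA[OF c1 c2] .
    then have "b \<otimes> s \<otimes> inv b \<otimes> inv s \<otimes> s \<otimes> b = s \<otimes> b" using b sc by simp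
    then show ?thesis using b sc by (simp add: m_assoc)
  qed
  have aN: "a \<notin> N"
  proof
    assume "a \<in> N"
    have "T \<subseteq> {\<one>}"
    proof
      fix s assume sT: "s \<in> T"
      have sc: "s \<in> carrier G" using sT Tc by blast
      have "a \<otimes> s = s \<otimes> a" using comm_NA[OF \<open>a \<in> N\<close> aA sT] .
      then have "s \<in> A" using cent[OF sc] by simp
      then show "s \<in> {\<one>}" using TA sT by blast
    qed
    then show False using Tne subgroup.one_closed[OF T] by blast
  qed
  have aGN: "a \<in> carrier G - N" using a aN by blast
  have expa: "T \<subset> core_in G N ((conj_set G a T \<inter> N) <#> T)"
    using exp aGN unfolding expansive_def N_def by blast
  obtain y where yc: "y \<in> conj_set G a T" and yN: "y \<in> N" and yT: "y \<notin> T"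
  proof (rule ccontr)
    assume "\<not> thesis"
    then have sub: "conj_set G a T \<inter> N \<subseteq> T" using that by blast
    have "(conj_set G a T \<inter> N) <#> T \<subseteq> T"
      unfolding set_mult_def using sub T by (auto simp: subgroup.m_closed)
    moreover have "(conj_set G a T \<inter> N) <#> T \<subseteq> carrier G"
      using sub Tc unfolding set_mult_def by (auto simp: subset_iff)
    moreover have "core_in G N Y \<subseteq> Y" if "Y \<subseteq> carrier G" for Y
    proof
      fix x assume "x \<in> core_in G N Y"
      then have "x \<in> conj_set G \<one> Y" unfolding core_in_def using subgroup.one_closed[OF Nsub] by blast
      then show "x \<in> Y" using conj_set_one[OF that] by simp
    qed
    ultimately have "core_in G N ((conj_set G a T \<inter> N) <#> T) \<subseteq> T" by blast
    then show False using expa by blast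
  qed
  obtain t0 where t0T: "t0 \<in> T" and y: "y = a \<otimes> t0 \<otimes> inv a" using yc conj_set_iff[OF a] by blast
  have t0: "t0 \<in> carrier G" using t0T Tc by blast
  define w0 where "w0 = t0 \<otimes> a \<otimes> inv t0 \<otimes> inv a"
  have w0c: "w0 \<in> carrier G" unfolding w0_def using t0 a by simp
  have w0A: "w0 \<in> A" unfolding w0_def using A_mult[OF conj_A[OF t0 aA] A_inv[OF aA]] .
  have "inv w0 = y \<otimes> inv t0" unfolding w0_def y using t0 a by (simp add: inv_mult_group m_assoc)
  then have "inv w0 \<in> N" using yN TN t0T Nsub by (simp add: subgroup.m_closed subgroup.m_inv_closed subset_iff)
  then have w0N: "w0 \<in> N" using subgroup.m_inv_closed[OF Nsub] w0c by fastforce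
  have w0T: "w0 \<notin> T"
  proof
    assume "w0 \<in> T"
    then have "inv w0 \<otimes> t0 \<in> T" using T t0T by (simp add: subgroup.m_closed subgroup.m_inv_closed)
    moreover have "inv w0 \<otimes> t0 = y" using \<open>inv w0 = y \<otimes> inv t0\<close> t0 y a by (simp add: m_assoc)
    ultimately show False using yT by simp
  qed
  have w01: "w0 \<noteq> \<one>" using w0T subgroup.one_closed[OF T] by blast
  have w0comm: "w0 \<otimes> s = s \<otimes> w0" if "s \<in> T" for s using comm_NA[OF w0N w0A that] .
  have t0a: "t0 \<otimes> a \<otimes> inv t0 = w0 \<otimes> a" unfolding w0_def using t0 a by (simp add: m_assoc)
  have tka: "t0 [^] k \<otimes> a \<otimes> inv (t0 [^] k) = w0 [^] k \<otimes> a" for k :: nat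
  proof (induction k)
    case 0 then show ?case using a by simp
  next
    case (Suc k)
    have cw: "t0 [^] k \<otimes> w0 = w0 \<otimes> t0 [^] k" using group_commutes_pow[of t0 w0 k] w0comm[OF t0T] t0 w0c by simp
    have "t0 [^] Suc k \<otimes> a \<otimes> inv (t0 [^] Suc k) = t0 [^] k \<otimes> (t0 \<otimes> a \<otimes> inv t0) \<otimes> inv (t0 [^] k)"
      using t0 a by (simp add: m_assoc inv_mult_group)
    also have "\<dots> = (t0 [^] k \<otimes> w0) \<otimes> a \<otimes> inv (t0 [^] k)" unfolding t0a using t0 a w0c by (simp add: m_assoc)
    also have "\<dots> = w0 \<otimes> (t0 [^] k \<otimes> a \<otimes> inv (t0 [^] k))" unfolding cw using t0 a w0c by (simp add: m_assoc)
    also have "\<dots> = (w0 \<otimes> w0 [^] k) \<otimes> a" unfolding Suc using w0c a by (simp add: m_assoc)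
    also have "\<dots> = w0 [^] Suc k \<otimes> a" by (subst nat_pow_Suc2[OF w0c]) (rule refl)
    finally show ?case .
  qed
  have t01: "t0 \<noteq> \<one>"
  proof
    assume "t0 = \<one>"
    then have "y = \<one>" using y a by simp
    then show False using yT subgroup.one_closed[OF T] by simp
  qed
  have od: "ord t0 dvd p ^ n" using ord_dvd_group_order[OF t0] ordG by simp
  then obtain s where s: "ord t0 = p ^ s" using divides_primepow_nat[OF prime] by auto
  have "s \<noteq> 0" using s t01 ord_eq_1[OF t0] by auto
  then obtain s' where s': "s = Suc s'" by (cases s) auto
  define m where "m = p ^ s'"
  have om: "ord t0 = m * p" unfolding m_def using s s' by simp
  define t where "t = t0 [^] m"
  define z where "z = w0 [^] m"
  have tT: "t \<in> T" unfolding t_def using sub_pow[OF T t0T] .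
  have tc: "t \<in> carrier G" using tT Tc by blast
  have "t [^] p = t0 [^] (ord t0)" unfolding t_def using t0 om by (simp add: nat_pow_pow)
  then have tp: "t [^] p = \<one>" using t0 by simp
  have w0o: "w0 [^] (ord t0) = \<one>"
  proof -
    have "w0 [^] (ord t0) \<otimes> a = a" using tka[of "ord t0"] t0 a by simp
    then show ?thesis using w0c a by simp
  qed
  have zp: "z [^] p = \<one>" unfolding z_def using w0o om w0c by (simp add: nat_pow_pow)
  have zA: "z \<in> A" unfolding z_def using A_pow[OF w0A] .
  have zc: "z \<in> carrier G" using zA Asub by blast
  have ta: "t \<otimes> a \<otimes> inv t = z \<otimes> a" unfolding t_def z_def by (rule tka)
  have tz: "t \<otimes> z = z \<otimes> t" unfolding t_def z_def using pow_comm2[OF w0comm[OF t0T] w0c t0] by simp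
  have t1: "t \<noteq> \<one>"
  proof
    assume "t = \<one>"
    then have "ord t0 dvd m" unfolding t_def using t0 by (simp add: pow_eq_id)
    then have "m * p dvd m * 1" using om by simp
    moreover have "m > 0" unfolding m_def using prime prime_gt_0_nat by simp
    ultimately have "p dvd 1" by (simp only: nat_mult_dvd_cancel_disj) simp
    then show False using prime by simp
  qed
  have z1: "z \<noteq> \<one>"
  proof
    assume "z = \<one>"
    then have "t \<otimes> a \<otimes> inv t = a" using ta a by simp
    then have "t \<otimes> a = a \<otimes> t" using conj_fix_comm tc a by blast
    then have "t \<in> A" using cent[OF tc] by simp
    then show False using TA[OF tT] t1 by blast
  qed
  show ?thesis using tc tp zA z1 zp ta tz by blast
qed

end

definition cs :: "('a, 'b) monoid_scheme \<Rightarrow> 'a \<Rightarrow> 'a set \<Rightarrow> 'a set" where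
  "cs M g S = (\<lambda>s. g \<otimes>\<^bsub>M\<^esub> s \<otimes>\<^bsub>M\<^esub> inv\<^bsub>M\<^esub> g) ` S"

context group begin

lemma cs_sub: "g \<in> carrier G \<Longrightarrow> S \<subseteq> carrier G \<Longrightarrow> cs G g S \<subseteq> carrier G"
  unfolding cs_def by auto

lemma cs_one: "S \<subseteq> carrier G \<Longrightarrow> cs G \<one> S = S"
  unfolding cs_def by (auto simp: subset_iff image_iff)

lemma cs_comp: "g \<in> carrier G \<Longrightarrow> h \<in> carrier G \<Longrightarrow> S \<subseteq> carrier G \<Longrightarrow> cs G g (cs G h S) = cs G (g \<otimes> h) S"
  unfolding cs_def image_image
proof (intro image_cong refl)
  fix s assume "g \<in> carrier G" "h \<in> carrier G" "S \<subseteq> carrier G" "s \<in> S"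
  then show "g \<otimes> (h \<otimes> s \<otimes> inv h) \<otimes> inv g = g \<otimes> h \<otimes> s \<otimes> inv (g \<otimes> h)"
    by (auto simp: m_assoc inv_mult_group)
qed

lemma cs_lr: "g \<in> carrier G \<Longrightarrow> S \<subseteq> carrier G \<Longrightarrow> g <# S #> inv g = cs G g S"
  unfolding cs_def l_coset_def r_coset_def by auto

lemma p_count:
  assumes fin: "finite (carrier G)" and ordG: "order G = p ^ n" and prime: "Factorial_Ring.prime (p::nat)"
  shows "finite Y \<Longrightarrow> Y \<subseteq> {H. H \<subseteq> carrier G} \<Longrightarrow> (\<forall>g\<in>carrier G. \<forall>S\<in>Y. cs G g S \<in> Y) \<Longrightarrow>
    card Y mod p = card {S\<in>Y. \<forall>g\<in>carrier G. cs G g S = S} mod p"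
proof (induction "card Y" arbitrary: Y rule: less_induct)
  case less
  note finY = less.prems(1) and YE = less.prems(2) and inv = less.prems(3)
  show ?case
  proof (cases "\<forall>S\<in>Y. \<forall>g\<in>carrier G. cs G g S = S")
    case True
    then have "{S\<in>Y. \<forall>g\<in>carrier G. cs G g S = S} = Y" by blast
    then show ?thesis by simp
  next
    case False
    then obtain S g0 where SY: "S \<in> Y" and g0: "g0 \<in> carrier G" and nf: "cs G g0 S \<noteq> S" by blast
    have Sc: "S \<subseteq> carrier G" using SY YE by blast
    define \<phi> where "\<phi> = (\<lambda>g. \<lambda>H \<in> {H. H \<subseteq> carrier G}. g <# H #> inv g)"
    have GA: "group_action G {H. H \<subseteq> carrier G} \<phi>" unfolding \<phi>_def by (rule action_by_conjugation_on_power_set)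
    define Orb where "Orb = {cs G g S | g. g \<in> carrier G}"
    have eq: "\<phi> g S = cs G g S" if "g \<in> carrier G" for g unfolding \<phi>_def using Sc cs_lr[OF that Sc] by simp
    have orb: "orbit G \<phi> S = Orb"
    proof (rule equalityI; rule subsetI)
      fix Q assume "Q \<in> orbit G \<phi> S"
      then obtain g where g: "g \<in> carrier G" and Q: "Q = \<phi> g S" unfolding orbit_def by blast
      show "Q \<in> Orb" unfolding Orb_def Q eq[OF g] using g by blast
    next
      fix Q assume "Q \<in> Orb"
      then obtain g where g: "g \<in> carrier G" and Q: "Q = cs G g S" unfolding Orb_def by blast
      show "Q \<in> orbit G \<phi> S" unfolding orbit_def Q eq[OF g, symmetric] using g by blast
    qed
    have OY: "Orb \<subseteq> Y" unfolding Orb_def using inv SY by blast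
    have finO: "finite Orb" using OY finY finite_subset by blast
    have "card Orb * card (stabilizer G \<phi> S) = order G"
      using group_action.orbit_stabilizer_theorem[OF GA] Sc orb by force
    then have "card Orb dvd p ^ n" using ordG by (metis dvd_triv_left)
    then obtain j where cj: "card Orb = p ^ j" using divides_primepow_nat[OF prime] by auto
    have "S \<in> Orb" unfolding Orb_def using cs_one[OF Sc] by (auto intro!: exI[of _ \<one>])
    moreover have "cs G g0 S \<in> Orb" unfolding Orb_def using g0 by blast
    ultimately have "{S, cs G g0 S} \<subseteq> Orb" by blast
    then have "card {S, cs G g0 S} \<le> card Orb" using finO card_mono by blast
    then have "2 \<le> card Orb" using nf by simp
    then have "j \<noteq> 0" using cj by (cases j) auto
    then have pO: "p dvd card Orb" using cj by (simp add: dvd_power)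
    define Y' where "Y' = Y - Orb"
    have finY': "finite Y'" unfolding Y'_def using finY by simp
    have lt: "card Y' < card Y"
    proof (rule psubset_card_mono[OF finY])
      show "Y' \<subset> Y" unfolding Y'_def using \<open>S \<in> Orb\<close> SY by blast
    qed
    have Y'E: "Y' \<subseteq> {H. H \<subseteq> carrier G}" unfolding Y'_def using YE by blast
    have inv': "\<forall>g\<in>carrier G. \<forall>T\<in>Y'. cs G g T \<in> Y'"
    proof (intro ballI)
      fix g T assume g: "g \<in> carrier G" and T: "T \<in> Y'"
      have TY: "T \<in> Y" and TO: "T \<notin> Orb" using T unfolding Y'_def by auto
      have Tc: "T \<subseteq> carrier G" using TY YE by blast
      have "cs G g T \<notin> Orb"
      proof
        assume "cs G g T \<in> Orb"
        then obtain h where h: "h \<in> carrier G" and e: "cs G g T = cs G h S" unfolding Orb_def by blast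
        have "T = cs G (inv g) (cs G g T)" using cs_comp[OF inv_closed[OF g] g Tc] cs_one[OF Tc] g by simp
        also have "\<dots> = cs G (inv g \<otimes> h) S" unfolding e using cs_comp[OF inv_closed[OF g] h Sc] .
        finally have "T \<in> Orb" unfolding Orb_def using g h by blast
        then show False using TO by simp
      qed
      then show "cs G g T \<in> Y'" unfolding Y'_def using inv g TY by blast
    qed
    have IH: "card Y' mod p = card {T\<in>Y'. \<forall>g\<in>carrier G. cs G g T = T} mod p"
      using less.hyps[OF lt finY' Y'E inv'] .
    have fixeq: "{T\<in>Y'. \<forall>g\<in>carrier G. cs G g T = T} = {T\<in>Y. \<forall>g\<in>carrier G. cs G g T = T}"
    proof -
      have "T \<notin> Orb" if "T \<in> Y" and fx: "\<forall>g\<in>carrier G. cs G g T = T" for T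
      proof
        assume "T \<in> Orb"
        then obtain h where h: "h \<in> carrier G" and e: "T = cs G h S" unfolding Orb_def by blast
        have "S = cs G (inv h) T" unfolding e using cs_comp[OF inv_closed[OF h] h Sc] cs_one[OF Sc] h by simp
        also have "\<dots> = T" using fx h by simp
        finally have "S = T" .
        then show False using nf fx g0 by simp
      qed
      then show ?thesis unfolding Y'_def by blast
    qed
    have c1: "card Y' = card Y - card Orb" unfolding Y'_def by (rule card_Diff_subset[OF finO OY])
    have c2: "card Orb \<le> card Y" by (rule card_mono[OF finY OY])
    have cY: "card Y = card Y' + card Orb" using c1 c2 by simp
    obtain k where k: "card Orb = p * k" using pO by blast
    have "card Y mod p = card Y' mod p" unfolding cY k by simp
    then show ?thesis using IH fixeq by simp
  qed
qed

end

context group begin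

lemma rcos_conj:
  assumes An: "A \<lhd> G" and g: "g \<in> carrier G" and x: "x \<in> carrier G"
  shows "cs G g (A #> x) = A #> (g \<otimes> x \<otimes> inv g)"
proof -
  have Ac: "A \<subseteq> carrier G" using normal_imp_subgroup[OF An] subgroup.subset by blast
  show ?thesis
  proof (rule equalityI; rule subsetI)
    fix y assume "y \<in> cs G g (A #> x)"
    then obtain b where b: "b \<in> A" and y: "y = g \<otimes> (b \<otimes> x) \<otimes> inv g"
      unfolding cs_def r_coset_def by blast
    have bc: "b \<in> carrier G" using b Ac by blast
    have "y = (g \<otimes> b \<otimes> inv g) \<otimes> (g \<otimes> x \<otimes> inv g)" unfolding y using g x bc by (simp add: m_assoc)
    moreover have "g \<otimes> b \<otimes> inv g \<in> A" using normal.inv_op_closed2[OF An g b] .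
    ultimately show "y \<in> A #> (g \<otimes> x \<otimes> inv g)" unfolding r_coset_def by blast
  next
    fix y assume "y \<in> A #> (g \<otimes> x \<otimes> inv g)"
    then obtain b where b: "b \<in> A" and y: "y = b \<otimes> (g \<otimes> x \<otimes> inv g)" unfolding r_coset_def by blast
    have bc: "b \<in> carrier G" using b Ac by blast
    have b': "inv g \<otimes> b \<otimes> g \<in> A" using normal.inv_op_closed1[OF An g b] .
    have "y = g \<otimes> ((inv g \<otimes> b \<otimes> g) \<otimes> x) \<otimes> inv g" unfolding y using g x bc by (simp add: m_assoc)
    then show "y \<in> cs G g (A #> x)" unfolding cs_def r_coset_def using b' by blast
  qed
qed

lemma card_sub_dvd: "subgroup H G \<Longrightarrow> card H dvd order G"
  using lagrange by (metis dvd_triv_right)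

lemma fixed_coset:
  assumes fin: "finite (carrier G)" and ordG: "order G = p ^ n" and prime: "Factorial_Ring.prime (p::nat)"
    and An: "A \<lhd> G" and C: "subgroup C G" and Cn: "\<And>g c. g \<in> carrier G \<Longrightarrow> c \<in> C \<Longrightarrow> g \<otimes> c \<otimes> inv g \<in> C"
    and AC: "A \<subseteq> C" and AneC: "A \<noteq> C"
  shows "\<exists>x\<in>C. x \<notin> A \<and> (\<forall>y\<in>carrier G. \<exists>b\<in>A. y \<otimes> x \<otimes> inv y = b \<otimes> x)"
proof -
  have As: "subgroup A G" using normal_imp_subgroup[OF An] .
  have Ac: "A \<subseteq> carrier G" using subgroup.subset[OF As] .
  have Cc: "C \<subseteq> carrier G" using subgroup.subset[OF C] .
  define Xc where "Xc = {A #> x | x. x \<in> C}"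
  have XE: "Xc \<subseteq> {H. H \<subseteq> carrier G}" unfolding Xc_def using Cc Ac r_coset_subset_G by blast
  have finX: "finite Xc" using XE fin finite_subset[of Xc "Pow (carrier G)"] by auto
  have invX: "\<forall>g\<in>carrier G. \<forall>S\<in>Xc. cs G g S \<in> Xc"
  proof (intro ballI)
    fix g S assume g: "g \<in> carrier G" and S: "S \<in> Xc"
    then obtain x where x: "x \<in> C" and Sx: "S = A #> x" unfolding Xc_def by blast
    have "cs G g S = A #> (g \<otimes> x \<otimes> inv g)" unfolding Sx using rcos_conj[OF An g] x Cc by blast
    then show "cs G g S \<in> Xc" unfolding Xc_def using Cn[OF g x] by blast
  qed
  define F where "F = {S\<in>Xc. \<forall>g\<in>carrier G. cs G g S = S}"
  have cnt: "card Xc mod p = card F mod p" unfolding F_def using p_count[OF fin ordG prime finX XE invX] .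
  have grC: "group (G\<lparr>carrier := C\<rparr>)" using subgroup_imp_group[OF C] .
  have AsC: "subgroup A (G\<lparr>carrier := C\<rparr>)" using subgroup_incl[OF As C AC] .
  have "rcosets\<^bsub>G\<lparr>carrier := C\<rparr>\<^esub> A = Xc" unfolding Xc_def RCOSETS_def r_coset_def by auto
  then have lag: "card Xc * card A = card C"
    using group.lagrange[OF grC AsC] unfolding order_def by simp
  have cA: "card A dvd p ^ n" using card_sub_dvd[OF As] ordG by simp
  have cC: "card C dvd p ^ n" using card_sub_dvd[OF C] ordG by simp
  have finC: "finite C" using Cc fin finite_subset by blast
  have "card A < card C" using AC AneC finC by (simp add: psubset_card_mono)
  then have "card Xc \<noteq> 1" using lag by auto
  moreover have "card Xc dvd p ^ n" using lag cC by (metis dvd_mult_left)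
  ultimately obtain k where "card Xc = p ^ k" "k \<noteq> 0" using divides_primepow_nat[OF prime] by (metis power_0)
  then have "p dvd card Xc" by (simp add: dvd_power)
  then have pF: "p dvd card F" using cnt by (simp add: mod_eq_0_iff_dvd[symmetric])
  have AX: "A \<in> Xc" unfolding Xc_def using coset_mult_one[OF Ac] subgroup.one_closed[OF C] by force
  have AF: "A \<in> F" unfolding F_def
  proof (intro CollectI conjI ballI AX)
    fix g assume g: "g \<in> carrier G"
    have "cs G g A = cs G g (A #> \<one>)" using coset_mult_one[OF Ac] by simp
    also have "\<dots> = A #> (g \<otimes> \<one> \<otimes> inv g)" using rcos_conj[OF An g] by simp
    also have "\<dots> = A" using g coset_mult_one[OF Ac] by simp
    finally show "cs G g A = A" .
  qed
  have finF: "finite F" unfolding F_def using finX by simp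
  obtain S where SF: "S \<in> F" and SA: "S \<noteq> A"
  proof (rule ccontr)
    assume "\<not> thesis"
    then have "F \<subseteq> {A}" using that by blast
    then have "F = {A}" using AF by blast
    then have "p dvd 1" using pF by simp
    then show False using prime by simp
  qed
  obtain x where x: "x \<in> C" and Sx: "S = A #> x" using SF unfolding F_def Xc_def by blast
  have xc: "x \<in> carrier G" using x Cc by blast
  have xA: "x \<notin> A"
  proof
    assume "x \<in> A"
    then have "A #> x = A" using subgroup.rcos_const[OF As is_group] by simp
    then show False using SA Sx by simp
  qed
  have "\<exists>b\<in>A. y \<otimes> x \<otimes> inv y = b \<otimes> x" if y: "y \<in> carrier G" for y
  proof -
    have "cs G y S = S" using SF y unfolding F_def by blast
    then have "A #> (y \<otimes> x \<otimes> inv y) = A #> x" using rcos_conj[OF An y xc] Sx by simp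
    moreover have "y \<otimes> x \<otimes> inv y \<in> A #> (y \<otimes> x \<otimes> inv y)" using rcos_self[OF _ As] y xc by simp
    ultimately have "y \<otimes> x \<otimes> inv y \<in> A #> x" by simp
    then show ?thesis unfolding r_coset_def by blast
  qed
  then show ?thesis using x xA by blast
qed

end

context group begin

lemma self_cent:
  assumes fin: "finite (carrier G)" and ordG: "order G = p ^ n" and prime: "Factorial_Ring.prime (p::nat)"
    and An: "A \<lhd> G" and Aab: "\<And>x y. x \<in> A \<Longrightarrow> y \<in> A \<Longrightarrow> x \<otimes> y = y \<otimes> x"
    and maxA: "\<And>B. B \<lhd> G \<Longrightarrow> (\<forall>x\<in>B. \<forall>y\<in>B. x \<otimes> y = y \<otimes> x) \<Longrightarrow> A \<subseteq> B \<Longrightarrow> B = A"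
    and x: "x \<in> carrier G" and xc: "\<And>b. b \<in> A \<Longrightarrow> x \<otimes> b = b \<otimes> x"
  shows "x \<in> A"
proof (rule ccontr)
  assume xA: "x \<notin> A"
  have As: "subgroup A G" using normal_imp_subgroup[OF An] .
  have Ac: "A \<subseteq> carrier G" using subgroup.subset[OF As] .
  define C where "C = {c \<in> carrier G. \<forall>b\<in>A. c \<otimes> b = b \<otimes> c}"
  have Cs: "subgroup C G"
  proof (rule subgroupI)
    show "C \<subseteq> carrier G" unfolding C_def by blast
    show "C \<noteq> {}" unfolding C_def using x xc by blast
    fix c assume c: "c \<in> C"
    then have cc: "c \<in> carrier G" unfolding C_def by blast
    have "inv c \<otimes> b = b \<otimes> inv c" if b: "b \<in> A" for b
    proof -
      have bc: "b \<in> carrier G" using b Ac by blast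
      have "c \<otimes> b = b \<otimes> c" using c b unfolding C_def by blast
      then have "inv c \<otimes> (c \<otimes> b) \<otimes> inv c = inv c \<otimes> (b \<otimes> c) \<otimes> inv c" by simp
      then show ?thesis using cc bc by (simp add: m_assoc)
    qed
    then show "inv c \<in> C" unfolding C_def using cc by blast
  next
    fix c d assume c: "c \<in> C" and d: "d \<in> C"
    then have cc: "c \<in> carrier G" and dc: "d \<in> carrier G" unfolding C_def by auto
    have "c \<otimes> d \<otimes> b = b \<otimes> (c \<otimes> d)" if b: "b \<in> A" for b
    proof -
      have bc: "b \<in> carrier G" using b Ac by blast
      have e1: "d \<otimes> b = b \<otimes> d" using d b unfolding C_def by blast
      have e2: "c \<otimes> b = b \<otimes> c" using c b unfolding C_def by blast
      have "c \<otimes> d \<otimes> b = c \<otimes> (d \<otimes> b)" using cc dc bc by (simp add: m_assoc)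
      also have "\<dots> = (c \<otimes> b) \<otimes> d" unfolding e1 using cc dc bc by (simp add: m_assoc)
      also have "\<dots> = b \<otimes> (c \<otimes> d)" unfolding e2 using cc dc bc by (simp add: m_assoc)
      finally show ?thesis .
    qed
    then show "c \<otimes> d \<in> C" unfolding C_def using cc dc by blast
  qed
  have Cn: "g \<otimes> c \<otimes> inv g \<in> C" if g: "g \<in> carrier G" and c: "c \<in> C" for g c
  proof -
    have cc: "c \<in> carrier G" using c unfolding C_def by blast
    have "g \<otimes> c \<otimes> inv g \<otimes> b = b \<otimes> (g \<otimes> c \<otimes> inv g)" if b: "b \<in> A" for b
    proof -
      have bc: "b \<in> carrier G" using b Ac by blast
      have b': "inv g \<otimes> b \<otimes> g \<in> A" using normal.inv_op_closed1[OF An g b] .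
      have e: "c \<otimes> (inv g \<otimes> b \<otimes> g) = (inv g \<otimes> b \<otimes> g) \<otimes> c" using c b' unfolding C_def by blast
      have "g \<otimes> c \<otimes> inv g \<otimes> b = g \<otimes> (c \<otimes> (inv g \<otimes> b \<otimes> g)) \<otimes> inv g" using g cc bc by (simp add: m_assoc)
      also have "\<dots> = g \<otimes> ((inv g \<otimes> b \<otimes> g) \<otimes> c) \<otimes> inv g" unfolding e ..
      also have "\<dots> = b \<otimes> (g \<otimes> c \<otimes> inv g)" using g cc bc by (simp add: m_assoc)
      finally show ?thesis .
    qed
    then show ?thesis unfolding C_def using g cc by blast
  qed
  have AC: "A \<subseteq> C" unfolding C_def using Ac Aab by blast
  have xC: "x \<in> C" unfolding C_def using x xc by blast
  have AneC: "A \<noteq> C" using xA xC by blast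
  obtain u where uC: "u \<in> C" and uA: "u \<notin> A" and uc: "\<forall>y\<in>carrier G. \<exists>b\<in>A. y \<otimes> u \<otimes> inv y = b \<otimes> u"
    using fixed_coset[OF fin ordG prime An Cs Cn AC AneC] by blast
  have u: "u \<in> carrier G" using uC unfolding C_def by blast
  have ub: "u \<otimes> b = b \<otimes> u" if "b \<in> A" for b using uC that unfolding C_def by blast
  have ukb: "u [^] (k::nat) \<otimes> b = b \<otimes> u [^] k" if b: "b \<in> A" for b k
    using group_commutes_pow[OF ub[OF b] u] b Ac by blast
  define B where "B = {b \<otimes> u [^] (k::nat) | b k. b \<in> A}"
  have Bc: "B \<subseteq> carrier G" unfolding B_def using Ac u by auto
  have Bmult: "(b \<otimes> u [^] k) \<otimes> (b' \<otimes> u [^] l) = (b \<otimes> b') \<otimes> u [^] (k + l)"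
    if b: "b \<in> A" and b': "b' \<in> A" for b b' and k l :: nat
  proof -
    have bc: "b \<in> carrier G" and b'c: "b' \<in> carrier G" using b b' Ac by auto
    have "(b \<otimes> u [^] k) \<otimes> (b' \<otimes> u [^] l) = b \<otimes> (u [^] k \<otimes> b') \<otimes> u [^] l" using bc b'c u by (simp add: m_assoc)
    also have "\<dots> = b \<otimes> (b' \<otimes> u [^] k) \<otimes> u [^] l" using ukb[OF b'] by simp
    also have "\<dots> = (b \<otimes> b') \<otimes> u [^] (k + l)" using bc b'c u by (simp add: m_assoc nat_pow_mult)
    finally show ?thesis .
  qed
  have BmultB: "y1 \<otimes> y2 \<in> B" if y1B: "y1 \<in> B" and y2B: "y2 \<in> B" for y1 y2
  proof -
    obtain b k where b: "b \<in> A" and y1: "y1 = b \<otimes> u [^] (k::nat)" using y1B unfolding B_def by blast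
    obtain b' l where b': "b' \<in> A" and y2: "y2 = b' \<otimes> u [^] (l::nat)" using y2B unfolding B_def by blast
    have "b \<otimes> b' \<in> A" using subgroup.m_closed[OF As b b'] .
    then show ?thesis unfolding y1 y2 Bmult[OF b b'] B_def by blast
  qed
  have Bcomm: "y1 \<otimes> y2 = y2 \<otimes> y1" if y1B: "y1 \<in> B" and y2B: "y2 \<in> B" for y1 y2
  proof -
    obtain b k where b: "b \<in> A" and y1: "y1 = b \<otimes> u [^] (k::nat)" using y1B unfolding B_def by blast
    obtain b' l where b': "b' \<in> A" and y2: "y2 = b' \<otimes> u [^] (l::nat)" using y2B unfolding B_def by blast
    show ?thesis unfolding y1 y2 Bmult[OF b b'] Bmult[OF b' b] using Aab[OF b b'] by (simp add: add.commute)
  qed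
  have o1: "ord u \<ge> 1" using ord_ge_1[OF fin u] .
  have Binv: "inv y \<in> B" if yB: "y \<in> B" for y
  proof -
    obtain b k where b: "b \<in> A" and y: "y = b \<otimes> u [^] (k::nat)" using yB unfolding B_def by blast
    have bc: "b \<in> carrier G" using b Ac by blast
    have ib: "inv b \<in> A" using subgroup.m_inv_closed[OF As b] .
    have "(inv b \<otimes> u [^] (k * (ord u - 1))) \<otimes> y = (inv b \<otimes> b) \<otimes> u [^] (k * (ord u - 1) + k)"
      unfolding y by (rule Bmult[OF ib b])
    also have "k * (ord u - 1) + k = ord u * k" using o1 by (simp add: algebra_simps)
    also have "(inv b \<otimes> b) \<otimes> u [^] (ord u * k) = \<one>" using bc u by (simp add: nat_pow_pow[symmetric])
    finally have "inv y = inv b \<otimes> u [^] (k * (ord u - 1))" using y bc u by (intro inv_equality) auto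
    then show ?thesis unfolding B_def using ib by blast
  qed
  have Bs: "subgroup B G"
  proof (rule subgroupI[OF Bc])
    have "\<one> = \<one> \<otimes> u [^] (0::nat)" by simp
    then have "\<one> \<in> B" unfolding B_def using subgroup.one_closed[OF As] by blast
    then show "B \<noteq> {}" by blast
  qed (use Binv BmultB in auto)
  have Bn: "B \<lhd> G" unfolding normal_inv_iff
  proof (intro conjI Bs ballI)
    fix y h assume y: "y \<in> carrier G" and h: "h \<in> B"
    obtain b k where b: "b \<in> A" and hk: "h = b \<otimes> u [^] (k::nat)" using h unfolding B_def by blast
    have bc: "b \<in> carrier G" using b Ac by blast
    obtain b2 where b2: "b2 \<in> A" and yu: "y \<otimes> u \<otimes> inv y = b2 \<otimes> u" using uc y by blast
    have b2c: "b2 \<in> carrier G" using b2 Ac by blast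
    have "y \<otimes> h \<otimes> inv y = (y \<otimes> b \<otimes> inv y) \<otimes> (y \<otimes> u [^] k \<otimes> inv y)" unfolding hk using conj_mult y bc u by simp
    also have "\<dots> = (y \<otimes> b \<otimes> inv y) \<otimes> (b2 \<otimes> u) [^] k" using conj_pow y u yu by simp
    also have "\<dots> = (y \<otimes> b \<otimes> inv y) \<otimes> (b2 [^] k \<otimes> u [^] k)" using pow_mult_distrib[OF ub[OF b2, symmetric] b2c u] by simp
    also have "\<dots> = ((y \<otimes> b \<otimes> inv y) \<otimes> b2 [^] k) \<otimes> u [^] k" using y bc b2c u by (simp add: m_assoc)
    finally have e: "y \<otimes> h \<otimes> inv y = ((y \<otimes> b \<otimes> inv y) \<otimes> b2 [^] k) \<otimes> u [^] k" .
    have "(y \<otimes> b \<otimes> inv y) \<otimes> b2 [^] k \<in> A"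
      using subgroup.m_closed[OF As normal.inv_op_closed2[OF An y b] sub_pow[OF As b2]] .
    then show "y \<otimes> h \<otimes> inv y \<in> B" unfolding e B_def by blast
  qed
  have AB: "A \<subseteq> B"
  proof
    fix b assume b: "b \<in> A"
    have "b = b \<otimes> u [^] (0::nat)" using b Ac by auto
    then show "b \<in> B" unfolding B_def using b by blast
  qed
  have "u = \<one> \<otimes> u [^] (1::nat)" using u by simp
  then have uB: "u \<in> B" unfolding B_def using subgroup.one_closed[OF As] by blast
  have "B = A" using maxA[OF Bn _ AB] Bcomm by blast
  then show False using uB uA by simp
qed

end

context group begin

lemma main_aux:
  assumes fin: "finite (carrier G)" and ordG: "order G = p ^ n" and prime: "Factorial_Ring.prime (p::nat)"
    and R: "roquette_group G" and T: "subgroup T G" and Tne: "T \<noteq> {\<one>}" and exp: "expansive G T"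
    and core: "core_in G (carrier G) T = {\<one>}"
  shows False
proof -
  have Rc: "\<forall>E. E \<lhd> G \<and> comm_group (G\<lparr>carrier := E\<rparr>) \<longrightarrow> cyclic_group (G\<lparr>carrier := E\<rparr>)"
    using R unfolding roquette_group_def by blast
  define Fam where "Fam = {B. B \<lhd> G \<and> (\<forall>x\<in>B. \<forall>y\<in>B. x \<otimes> y = y \<otimes> x)}"
  have "Fam \<subseteq> Pow (carrier G)" unfolding Fam_def
    using normal_imp_subgroup subgroup.subset by blast
  then have finF: "finite Fam" using fin finite_subset by (metis finite_Pow_iff)
  have "{\<one>} \<lhd> G" unfolding normal_inv_iff using triv_subgroup by simp
  then have "{\<one>} \<in> Fam" unfolding Fam_def by simp
  then have "Fam \<noteq> {}" by blast
  then obtain A where AF: "A \<in> Fam" and maxA0: "\<forall>B\<in>Fam. A \<le> B \<longrightarrow> A = B"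
    using finite_has_maximal[OF finF] by blast
  have An: "A \<lhd> G" and Aab: "\<And>x y. x \<in> A \<Longrightarrow> y \<in> A \<Longrightarrow> x \<otimes> y = y \<otimes> x" using AF unfolding Fam_def by auto
  have maxA: "\<And>B. B \<lhd> G \<Longrightarrow> (\<forall>x\<in>B. \<forall>y\<in>B. x \<otimes> y = y \<otimes> x) \<Longrightarrow> A \<subseteq> B \<Longrightarrow> B = A"
    using maxA0 unfolding Fam_def by blast
  have As: "subgroup A G" using normal_imp_subgroup[OF An] .
  have grA: "group (G\<lparr>carrier := A\<rparr>)" using subgroup_imp_group[OF As] .
  have cA: "comm_group (G\<lparr>carrier := A\<rparr>)"
    by (rule group.group_comm_groupI[OF grA]) (use Aab in simp)
  have cyc: "cyclic_group (G\<lparr>carrier := A\<rparr>)" using Rc An cA by blast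
  have "\<exists>x \<in> carrier (G\<lparr>carrier := A\<rparr>). carrier (G\<lparr>carrier := A\<rparr>) = range (\<lambda>n::int. x [^]\<^bsub>G\<lparr>carrier := A\<rparr>\<^esub> n)"
    using cyc group.cyclic_group[OF grA] by (simp only:)
  then obtain a where aA0: "a \<in> carrier (G\<lparr>carrier := A\<rparr>)" and rng0: "carrier (G\<lparr>carrier := A\<rparr>) = range (\<lambda>n::int. a [^]\<^bsub>G\<lparr>carrier := A\<rparr>\<^esub> n)"
    by blast
  have aA: "a \<in> A" using aA0 by simp
  have cAe: "carrier (G\<lparr>carrier := A\<rparr>) = A" by simp
  have rng: "A = range (\<lambda>n::int. a [^]\<^bsub>G\<lparr>carrier := A\<rparr>\<^esub> n)" using rng0 unfolding cAe .
  have a: "a \<in> carrier G" by (rule subgroup.mem_carrier[OF As aA])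
  have Aeq: "A = range (\<lambda>k::nat. a [^] k)"
  proof (rule equalityI; rule subsetI)
    fix y assume "y \<in> A"
    then have "y \<in> range (\<lambda>n::int. a [^]\<^bsub>G\<lparr>carrier := A\<rparr>\<^esub> n)" using rng by (simp only:)
    then obtain i where "y = a [^]\<^bsub>G\<lparr>carrier := A\<rparr>\<^esub> (i::int)" by blast
    then have yi: "y = a [^] (i::int)" by (simp only: int_pow_consistent[OF As aA])
    obtain k where "a [^] i = a [^] (k::nat)" using int_pow_nat_ex[OF fin a] by blast
    then show "y \<in> range (\<lambda>k::nat. a [^] k)" using yi by simp
  next
    fix y assume "y \<in> range (\<lambda>k::nat. a [^] k)"
    then obtain k :: nat where yk: "y = a [^] k" by blast
    show "y \<in> A" unfolding yk using sub_pow[OF As aA] .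
  qed
  have cent: "x \<in> A" if x: "x \<in> carrier G" and xa: "x \<otimes> a = a \<otimes> x" for x
  proof (rule self_cent[OF fin ordG prime An Aab maxA x])
    fix b assume "b \<in> A"
    then obtain k :: nat where bk: "b = a [^] k" using Aeq by blast
    have "a [^] k \<otimes> x = x \<otimes> a [^] k" using group_commutes_pow[OF xa[symmetric] a x] .
    then show "x \<otimes> b = b \<otimes> x" unfolding bk by simp
  qed
  have r0: "rq0 G p n A a" by (rule rq0.intro[OF is_group rq0_axioms.intro[OF fin ordG prime An a Aeq cent]])
  interpret R0: rq0 G p n A a by (rule r0)
  obtain t z where tc: "t \<in> carrier G" and tp: "t [^] p = \<one>" and zA: "z \<in> A" and z1: "z \<noteq> \<one>"
    and zp: "z [^] p = \<one>" and ta: "t \<otimes> a \<otimes> inv t = z \<otimes> a" and tz: "t \<otimes> z = z \<otimes> t"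
    using R0.derive_tz[OF T Tne exp core] by blast
  have r1: "rq G p n A a t z" by (rule rq.intro[OF r0 rq_axioms.intro[OF tc tp zA z1 zp ta tz]])
  interpret R1: rq G p n A a t z by (rule r1)
  show False using R1.rq_false[OF Rc] .
qed

end

theorem mainTheorem1:
  fixes P :: "('a, 'b) monoid_scheme" and p n :: nat
  assumes "Factorial_Ring.prime p"
    and "group P"
    and "finite (carrier P)"
    and "order P = p ^ n"
    and "roquette_group P"
  shows "\<not> (\<exists>T. subgroup T P \<and> T \<noteq> {\<one>\<^bsub>P\<^esub>} \<and> expansive P T
              \<and> core_in P (carrier P) T = {\<one>\<^bsub>P\<^esub>})"
proof
  assume "\<exists>T. subgroup T P \<and> T \<noteq> {\<one>\<^bsub>P\<^esub>} \<and> expansive P T \<and> core_in P (carrier P) T = {\<one>\<^bsub>P\<^esub>}"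
  then obtain T where T: "subgroup T P" and Tne: "T \<noteq> {\<one>\<^bsub>P\<^esub>}" and exp: "expansive P T"
    and core: "core_in P (carrier P) T = {\<one>\<^bsub>P\<^esub>}" by blast
  show False using group.main_aux[OF assms(2) assms(3) assms(4) assms(1) assms(5) T Tne exp core] .
qed

end
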